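(* Let $\dot{\mathcal H}$ be the point (bound-state) subspace of the Hydrogen atom Hamiltonian as described in the context, and let $0\neq|\psi\rangle\in\dot{\mathcal H}$. Then for each $0<q<1$, $D^+_{\mu_{|\psi\rangle}}(q)\le \tfrac13$.
   Context: The Hydrogen atom Hamiltonian is $H=-\Delta-\kappa/|x|$ acting in $\mathrm{L}^2(\mathbb R^3)$, $\kappa>0$. Its eigenvalues are $\lambda_n=-\Lambda/n^2$, $n=1,2,\dots$, with $\Lambda=\kappa^2/4$, each of multiplicity $n^2$, with orthonormal eigenfunctions $|n,l,m\rangle$, $l=0,\dots,n-1$, $m=-l,\dots,l$. $\dot{\mathcal H}$ denotes the closed subspace spanned by all $|n,l,m\rangle$. For $|\psi\rangle=\sum a_{n,l,m}|n,l,m\rangle\in\dot{\mathcal H}$ its spectral measure is $\mu_{|\psi\rangle}=\sum_{n,l,m}|a_{n,l,m}|^2\delta_{\lambda_n}$. For a finite positive Borel measure $\mu$ on $\mathbb R$ and $q>0$, $q\neq1$, set $I_\mu(q,\epsilon)=\int_{\{x:\mu(B(x,\epsilon))>0\}}\mu(B(x,\epsilon))^{q-1}\,d\mu(x)$ with $B(x,\epsilon)=(x-\epsilon,x+\epsilon)$, and define the upper generalized fractal dimension $D^+_\mu(q)=\limsup_{\epsilon\downarrow0}\frac{\ln I_\mu(q,\epsilon)}{(q-1)\ln\epsilon}$. *)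

theory Defs
  imports "HOL-Analysis.Analysis"
begin

definition hyd_index :: "(nat \<times> nat \<times> int) set" where
  "hyd_index = {(n, l, m). 1 \<le> n \<and> l < n \<and> \<bar>m\<bar> \<le> int l}"

definition hyd_eigenvalue :: "real \<Rightarrow> nat \<Rightarrow> real" where
  "hyd_eigenvalue \<kappa> n = - ((\<kappa>^2 / 4) / (real n)^2)"

text \<open>Spectral measure of psi = sum a_{n,l,m} |n,l,m>:
  mu = sum |a_{n,l,m}|^2 delta_{lambda_n}, as a Borel measure on the reals
  (push-forward of the weighted counting measure on the index set).\<close>
definition hyd_spectral_measure ::
    "real \<Rightarrow> (nat \<times> nat \<times> int \<Rightarrow> complex) \<Rightarrow> real measure" where
  "hyd_spectral_measure \<kappa> a =
     distr (density (count_space hyd_index) (\<lambda>i. ennreal ((cmod (a i))^2))) borel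
           (\<lambda>(n, l, m). hyd_eigenvalue \<kappa> n)"

definition gen_I :: "real measure \<Rightarrow> real \<Rightarrow> real \<Rightarrow> real" where
  "gen_I \<mu> q \<epsilon> =
     (LINT x : {x. measure \<mu> {x - \<epsilon> <..< x + \<epsilon>} > 0} | \<mu>.
        (measure \<mu> {x - \<epsilon> <..< x + \<epsilon>}) powr (q - 1))"

definition upper_gen_dim :: "real measure \<Rightarrow> real \<Rightarrow> ereal" where
  "upper_gen_dim \<mu> q =
     Limsup (at_right 0) (\<lambda>\<epsilon>. ereal (ln (gen_I \<mu> q \<epsilon>) / ((q - 1) * ln \<epsilon>)))"

end

theory Submission
  imports Defs
begin

lemma powr_sum_holder:
  fixes x :: "'a \<Rightarrow> real" and q :: real
  assumes K: "finite K" and nn: "\<And>k. k \<in> K \<Longrightarrow> x k \<ge> 0" and q: "0 < q" "q < 1"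
  shows "(\<Sum>k\<in>K. x k powr q) \<le> real (card K) powr (1 - q) * (\<Sum>k\<in>K. x k) powr q"
proof (cases "(\<Sum>k\<in>K. x k) = 0")
  case True
  then have "\<forall>k\<in>K. x k = 0" using sum_nonneg_eq_0_iff[OF K] nn by blast
  then show ?thesis by simp
next
  case False
  define S where "S = (\<Sum>k\<in>K. x k)"
  have S0: "S > 0" using False nn unfolding S_def by (simp add: order_less_le sum_nonneg)
  have Kne: "K \<noteq> {}" using False by auto
  define n where "n = real (card K)"
  have n0: "n > 0" using Kne K unfolding n_def by (simp add: card_gt_0_iff)
  define c where "c = S / n"
  have c0: "c > 0" using S0 n0 by (simp add: c_def)
  have each: "x k powr q \<le> c powr (q - 1) * (q * x k + (1 - q) * c)" if "k \<in> K" for k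
  proof (cases "x k = 0")
    case True
    then show ?thesis using c0 q by simp
  next
    case False
    then have xk: "x k > 0" using nn[OF that] by simp
    have "x k powr q * c powr (1 - q) \<le> q * x k + (1 - q) * c"
      using Youngs_inequality_0[of q "1-q" "x k" c] xk c0 q by simp
    then have "c powr (q - 1) * (x k powr q * c powr (1 - q)) \<le> c powr (q - 1) * (q * x k + (1 - q) * c)"
      by (intro mult_left_mono) auto
    moreover have "c powr (q - 1) * (x k powr q * c powr (1 - q)) = x k powr q"
      using c0 by (simp add: powr_add[symmetric])
    ultimately show ?thesis by simp
  qed
  have "(\<Sum>k\<in>K. x k powr q) \<le> (\<Sum>k\<in>K. c powr (q - 1) * (q * x k + (1 - q) * c))"
    by (intro sum_mono each)
  also have "\<dots> = c powr (q - 1) * (\<Sum>k\<in>K. q * x k + (1 - q) * c)"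
    by (simp add: sum_distrib_left)
  also have "\<dots> = c powr (q - 1) * (q * S + (1 - q) * c * n)"
    by (simp add: sum.distrib sum_distrib_left[symmetric] S_def n_def)
  also have "\<dots> = c powr (q - 1) * S"
  proof -
    have "c * n = S" using n0 by (simp add: c_def)
    then have "q * S + (1 - q) * c * n = S" by (simp add: algebra_simps)
    then show ?thesis by simp
  qed
  also have "\<dots> = (S powr (q - 1) / n powr (q - 1)) * S"
    by (simp add: c_def powr_divide S0 n0 less_imp_le)
  also have "\<dots> = n powr (1 - q) * (S powr (q - 1) * S powr 1)"
    using n0 S0 powr_minus[of n "q - 1"] by (simp add: divide_inverse)
  also have "\<dots> = n powr (1 - q) * S powr q"
    using S0 powr_add[of S "q - 1" 1, symmetric] by simp
  finally show ?thesis by (simp add: n_def S_def)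
qed
lemma card_cells:
  fixes L \<epsilon> :: real
  assumes L: "L > 0" and e: "0 < \<epsilon>" "\<epsilon> \<le> 1"
  defines "K \<equiv> (\<lambda>n::nat. \<lfloor>(- (L / (real n)^2)) / \<epsilon>\<rfloor>) ` {1..}"
  shows "finite K \<and> real (card K) \<le> (2 + L) * \<epsilon> powr (-1/3)"
proof -
  define s where "s = \<epsilon> powr (1/3)"
  have s0: "s > 0" using e by (simp add: s_def)
  have s1: "s \<le> 1" using e unfolding s_def by (intro powr_le1) auto
  define t where "t = \<epsilon> powr (-1/3)"
  have ts: "t = 1 / s" unfolding t_def s_def using powr_minus_divide[of \<epsilon> "1/3"] by simp
  have t1: "t \<ge> 1" using s0 s1 ts by simp
  define N where "N = nat \<lfloor>t\<rfloor>"
  have N1: "real N \<le> t" "t < real N + 1" using t1 by (simp_all add: N_def)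
  define a where "a = \<lfloor>- (L / (real N + 1)^2) / \<epsilon>\<rfloor>"
  have sub: "K \<subseteq> (\<lambda>n::nat. \<lfloor>(- (L / (real n)^2)) / \<epsilon>\<rfloor>) ` {1..N} \<union> {a..-1}"
  proof
    fix k assume "k \<in> K"
    then obtain n where n: "n \<ge> 1" "k = \<lfloor>(- (L / (real n)^2)) / \<epsilon>\<rfloor>" unfolding K_def by auto
    show "k \<in> (\<lambda>n::nat. \<lfloor>(- (L / (real n)^2)) / \<epsilon>\<rfloor>) ` {1..N} \<union> {a..-1}"
    proof (cases "n \<le> N")
      case True then show ?thesis using n by auto
    next
      case False
      then have "real n \<ge> real N + 1" by simp
      then have "(real N + 1)^2 \<le> (real n)^2" by (intro power_mono) auto
      then have "L / (real n)^2 \<le> L / (real N + 1)^2"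
        using L by (intro divide_left_mono) auto
      then have "- (L / (real N + 1)^2) / \<epsilon> \<le> (- (L / (real n)^2)) / \<epsilon>"
        using e by (intro divide_right_mono) auto
      then have "a \<le> k" unfolding a_def n(2) by (intro floor_mono)
      moreover have "(- (L / (real n)^2)) / \<epsilon> < 0" using n L e by (simp add: divide_neg_pos)
      then have "k \<le> -1" unfolding n(2) by linarith
      ultimately show ?thesis by auto
    qed
  qed
  have fin: "finite K" by (rule finite_subset[OF sub]) auto
  have "card K \<le> card ((\<lambda>n::nat. \<lfloor>(- (L / (real n)^2)) / \<epsilon>\<rfloor>) ` {1..N} \<union> {a..-1})"
    by (rule card_mono[OF _ sub]) auto
  also have "\<dots> \<le> card ((\<lambda>n::nat. \<lfloor>(- (L / (real n)^2)) / \<epsilon>\<rfloor>) ` {1..N}) + card {a..-1}"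
    by (rule card_Un_le)
  also have "\<dots> \<le> N + nat (- a)"
    using card_image_le[of "{1..N}" "\<lambda>n::nat. \<lfloor>(- (L / (real n)^2)) / \<epsilon>\<rfloor>"] by simp
  finally have c1: "real (card K) \<le> real N + real (nat (- a))" by linarith
  have "(real N + 1)^2 * \<epsilon> \<ge> t^2 * \<epsilon>"
    using N1 t1 e by (intro mult_right_mono power_mono) auto
  moreover have "t^2 * \<epsilon> = s"
  proof -
    have "\<epsilon> = s * s * s" unfolding s_def using e
      by (simp add: powr_add[symmetric])
    then show ?thesis using s0 by (simp add: ts power2_eq_square)
  qed
  ultimately have b: "(real N + 1)^2 * \<epsilon> \<ge> s" by simp
  define v where "v = L / ((real N + 1)^2 * \<epsilon>)"
  have av: "a = \<lfloor>- v\<rfloor>" unfolding a_def v_def by (simp add: divide_divide_eq_left)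
  have h1: "real_of_int (- a) \<le> v + 1"
    unfolding av using real_of_int_floor_add_one_gt[of "- v"] by linarith
  have "v \<le> L / s"
    unfolding v_def using b L s0 by (intro divide_left_mono) auto
  also have "L / s = L * t" by (simp add: ts)
  finally have h2: "v \<le> L * t" .
  have Lt: "L * t \<ge> 0" using L t1 by simp
  have "real (nat (- a)) \<le> L * t + 1"
  proof (cases "- a \<ge> 0")
    case True
    then have "real (nat (- a)) = real_of_int (- a)" by simp
    then show ?thesis using h1 h2 by linarith
  next
    case False
    then show ?thesis using Lt by simp
  qed
  with c1 N1 have "real (card K) \<le> t + L * t + 1" by linarith
  also have "\<dots> \<le> (2 + L) * t" using t1 by (simp add: algebra_simps)
  finally show ?thesis using fin by (simp add: t_def)
qed

lemma gen_I_bound: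
  fixes \<mu> :: "real measure"
  assumes fm: "finite_measure \<mu>" and sets: "sets \<mu> = sets borel" and e: "\<epsilon> > 0"
    and q: "0 < q" "q < 1" and K: "finite K" and AE: "AE x in \<mu>. \<lfloor>x / \<epsilon>\<rfloor> \<in> K"
  shows "gen_I \<mu> q \<epsilon> \<le> real (card K) powr (1 - q) * measure \<mu> UNIV powr q"
proof -
  interpret finite_measure \<mu> by (rule fm)
  have sp: "space \<mu> = UNIV" using sets_eq_imp_space_eq[OF sets] by simp
  define J where "J k = {real_of_int k * \<epsilon> ..< (real_of_int k + 1) * \<epsilon>}" for k :: int
  have Jiff: "x \<in> J k \<longleftrightarrow> \<lfloor>x / \<epsilon>\<rfloor> = k" for x k
    using e by (simp add: J_def floor_eq_iff pos_le_divide_eq pos_divide_less_eq)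
  have Jsets: "J k \<in> sets \<mu>" for k using sets by (simp add: J_def)
  define m where "m k = measure \<mu> (J k)" for k
  have m0: "m k \<ge> 0" for k by (simp add: m_def)
  define f where "f x = measure \<mu> {x - \<epsilon> <..< x + \<epsilon>}" for x
  define g where "g x = indicator {x. f x > 0} x *\<^sub>R (f x powr (q - 1))" for x
  have I: "gen_I \<mu> q \<epsilon> = integral\<^sup>L \<mu> g"
    unfolding gen_I_def set_lebesgue_integral_def g_def[abs_def] f_def by simp
  have g0: "g x \<ge> 0" for x by (simp add: g_def indicator_def)
  have AE1: "AE x in \<mu>. \<forall>k\<in>K. m k = 0 \<longrightarrow> x \<notin> J k"
  proof (rule AE_finite_allI[OF K])
    fix k assume "k \<in> K"
    show "AE x in \<mu>. m k = 0 \<longrightarrow> x \<notin> J k"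
    proof (cases "m k = 0")
      case True
      then have "J k \<in> null_sets \<mu>" using Jsets by (simp add: m_def emeasure_eq_measure null_sets_def)
      from AE_not_in[OF this] show ?thesis by (rule eventually_mono) simp
    qed simp
  qed
  define h where "h x = (\<Sum>k\<in>K. m k powr (q - 1) * indicator (J k) x)" for x
  have gh: "AE x in \<mu>. g x \<le> h x"
    using AE AE1
  proof eventually_elim
    case (elim x)
    define k where "k = \<lfloor>x / \<epsilon>\<rfloor>"
    have xk: "x \<in> J k" using Jiff k_def by simp
    have kK: "k \<in> K" using elim k_def by simp
    have "m k \<noteq> 0" using elim xk kK by auto
    then have mk: "m k > 0" using m0[of k] by simp
    have "J k \<subseteq> {x - \<epsilon> <..< x + \<epsilon>}" using xk by (auto simp: J_def algebra_simps)
    then have "m k \<le> f x" unfolding m_def f_def by (intro finite_measure_mono) (auto simp: sets)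
    then have fx: "f x > 0" "m k \<le> f x" using mk by auto
    have "g x = f x powr (q - 1)" using fx by (simp add: g_def)
    also have "\<dots> \<le> m k powr (q - 1)" using fx mk q by (intro powr_mono2') auto
    also have "m k powr (q - 1) = h x"
    proof -
      have "h x = (\<Sum>k'\<in>K. if k' = k then m k powr (q - 1) else 0)"
        unfolding h_def by (intro sum.cong refl) (auto simp: Jiff k_def indicator_def)
      also have "\<dots> = m k powr (q - 1)" using kK K by simp
      finally show ?thesis by simp
    qed
    finally show ?case .
  qed
  have hint: "(\<integral>\<^sup>+x. ennreal (h x) \<partial>\<mu>) = ennreal (\<Sum>k\<in>K. m k powr q)"
  proof -
    have "(\<integral>\<^sup>+x. ennreal (h x) \<partial>\<mu>) = (\<integral>\<^sup>+x. (\<Sum>k\<in>K. ennreal (m k powr (q - 1)) * indicator (J k) x) \<partial>\<mu>)"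
      unfolding h_def
      by (intro nn_integral_cong) (simp add: sum_ennreal[symmetric] ennreal_mult' ennreal_indicator)
    also have "\<dots> = (\<Sum>k\<in>K. (\<integral>\<^sup>+x. ennreal (m k powr (q - 1)) * indicator (J k) x \<partial>\<mu>))"
      by (rule nn_integral_sum) (use Jsets in auto)
    also have "\<dots> = (\<Sum>k\<in>K. ennreal (m k powr (q - 1)) * emeasure \<mu> (J k))"
      by (intro sum.cong refl nn_integral_cmult_indicator Jsets)
    also have "\<dots> = (\<Sum>k\<in>K. ennreal (m k powr q))"
    proof (intro sum.cong refl)
      fix k
      have "m k powr (q - 1) * m k = m k powr q"
      proof (cases "m k = 0")
        case False
        then have "m k > 0" using m0[of k] by simp
        then show ?thesis using powr_add[of "m k" "q - 1" 1, symmetric] by simp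
      qed simp
      then show "ennreal (m k powr (q - 1)) * emeasure \<mu> (J k) = ennreal (m k powr q)"
        by (simp add: emeasure_eq_measure m_def[symmetric] ennreal_mult'[symmetric] m0)
    qed
    also have "\<dots> = ennreal (\<Sum>k\<in>K. m k powr q)" by (simp add: sum_ennreal)
    finally show ?thesis .
  qed
  have Ile: "gen_I \<mu> q \<epsilon> \<le> (\<Sum>k\<in>K. m k powr q)"
  proof (cases "integrable \<mu> g")
    case True
    then have "g \<in> borel_measurable \<mu>" by auto
    then have "integral\<^sup>L \<mu> g = enn2real (\<integral>\<^sup>+x. ennreal (g x) \<partial>\<mu>)"
      by (intro integral_eq_nn_integral) (auto simp: g0)
    also have "\<dots> \<le> enn2real (\<integral>\<^sup>+x. ennreal (h x) \<partial>\<mu>)"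
      by (intro enn2real_mono nn_integral_mono_AE) (use gh hint in \<open>auto elim!: eventually_mono intro: ennreal_leI\<close>)
    also have "\<dots> = (\<Sum>k\<in>K. m k powr q)" using hint by (simp add: sum_nonneg)
    finally show ?thesis using I by simp
  next
    case False
    then show ?thesis using I by (simp add: not_integrable_integral_eq sum_nonneg)
  qed
  also have "\<dots> \<le> real (card K) powr (1 - q) * (\<Sum>k\<in>K. m k) powr q"
    by (rule powr_sum_holder[OF K m0 q])
  also have "\<dots> \<le> real (card K) powr (1 - q) * measure \<mu> UNIV powr q"
  proof -
    have "(\<Sum>k\<in>K. m k) = measure \<mu> (\<Union>k\<in>K. J k)"
      unfolding m_def
      by (rule finite_measure_finite_Union[symmetric]) (use K Jsets in \<open>auto simp: disjoint_family_on_def Jiff\<close>)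
    also have "\<dots> \<le> measure \<mu> UNIV" using bounded_measure sp by simp
    finally show ?thesis using q by (intro mult_left_mono powr_mono2) (auto simp: sum_nonneg m0)
  qed
  finally show ?thesis .
qed
lemma lim_aux: "((\<lambda>e::real. ereal (1/3 + A / ((q - 1) * ln e))) \<longlongrightarrow> ereal (1/3)) (at_right 0)"
proof -
  have "((\<lambda>e::real. inverse (ln e)) \<longlongrightarrow> 0) (at_right 0)"
    using filterlim_compose[OF tendsto_inverse_0 filterlim_at_bot_imp_at_infinity[OF ln_at_0]] by (simp add: o_def)
  then have "((\<lambda>e::real. (A / (q - 1)) * inverse (ln e)) \<longlongrightarrow> 0) (at_right 0)"
    by (rule tendsto_mult_right_zero)
  then have "((\<lambda>e::real. 1/3 + (A / (q - 1)) * inverse (ln e)) \<longlongrightarrow> 1/3 + 0) (at_right 0)"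
    by (intro tendsto_add) auto
  moreover have "(\<lambda>e::real. 1/3 + (A / (q - 1)) * inverse (ln e)) = (\<lambda>e::real. 1/3 + A / ((q - 1) * ln e))"
    by (rule ext) (simp add: field_simps)
  ultimately have "((\<lambda>e::real. 1/3 + A / ((q - 1) * ln e)) \<longlongrightarrow> 1/3) (at_right 0)"
    by simp
  then show ?thesis by (rule tendsto_ereal)
qed

lemma spec_facts:
  fixes \<kappa> :: real and a :: "nat \<times> nat \<times> int \<Rightarrow> complex"
  assumes sum: "(\<lambda>i. (cmod (a i))^2) summable_on hyd_index"
  shows "finite_measure (hyd_spectral_measure \<kappa> a)"
    and "sets (hyd_spectral_measure \<kappa> a) = sets borel"
    and "\<And>P. {x. P x} \<in> sets borel \<Longrightarrow> (\<And>n. n \<ge> 1 \<Longrightarrow> P (hyd_eigenvalue \<kappa> n)) \<Longrightarrow>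
          AE x in hyd_spectral_measure \<kappa> a. P x"
proof -
  define w where "w i = (cmod (a i))^2" for i
  define N where "N = density (count_space hyd_index) (\<lambda>i. ennreal (w i))"
  define lam where "lam = (\<lambda>(n::nat, l::nat, m::int). hyd_eigenvalue \<kappa> n)"
  have mu: "hyd_spectral_measure \<kappa> a = distr N borel lam"
    by (simp add: hyd_spectral_measure_def N_def w_def lam_def)
  have meas: "lam \<in> measurable N borel"
    unfolding N_def by (simp add: measurable_count_space_eq1)
  have "Infinite_Sum.abs_summable_on w hyd_index"
    using sum by (simp add: w_def)
  then have "Infinite_Set_Sum.abs_summable_on w hyd_index"
    using abs_summable_equivalent by blast
  then have "integrable (count_space hyd_index) w"
    by (simp add: abs_summable_on_def)
  then have fin: "(\<integral>\<^sup>+x. ennreal (w x) \<partial>count_space hyd_index) < \<infinity>"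
    by (simp add: integrable_iff_bounded w_def)
  have "emeasure N (space N) = (\<integral>\<^sup>+x. ennreal (w x) * indicator hyd_index x \<partial>count_space hyd_index)"
    unfolding N_def by (simp add: emeasure_density)
  also have "\<dots> = (\<integral>\<^sup>+x. ennreal (w x) \<partial>count_space hyd_index)"
    by (intro nn_integral_cong) simp
  finally have "emeasure N (space N) \<noteq> \<infinity>" using fin by simp
  then have "finite_measure N" by (rule finite_measureI)
  then show "finite_measure (hyd_spectral_measure \<kappa> a)"
    unfolding mu by (rule finite_measure.finite_measure_distr[OF _ meas])
  show "sets (hyd_spectral_measure \<kappa> a) = sets borel" unfolding mu by simp
  fix P :: "real \<Rightarrow> bool"
  assume P: "{x. P x} \<in> sets borel" and Pe: "\<And>n. n \<ge> 1 \<Longrightarrow> P (hyd_eigenvalue \<kappa> n)"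
  have "AE i in N. P (lam i)"
    by (rule AE_I2) (auto simp: N_def lam_def hyd_index_def Pe)
  then show "AE x in hyd_spectral_measure \<kappa> a. P x"
    unfolding mu using P by (subst AE_distr_iff[OF meas]) auto
qed

lemma gen_I_nonneg: "0 \<le> gen_I \<mu> q \<epsilon>"
proof -
  have "0 \<le> integral\<^sup>L \<mu> (\<lambda>x. indicator {x. 0 < measure \<mu> {x - \<epsilon><..<x + \<epsilon>}} x *\<^sub>R (measure \<mu> {x - \<epsilon><..<x + \<epsilon>} powr (q - 1)))"
    by (rule Bochner_Integration.integral_nonneg) (simp add: indicator_def)
  then show ?thesis unfolding gen_I_def set_lebesgue_integral_def .
qed
theorem proposition1:
  fixes \<kappa> :: real and a :: "nat \<times> nat \<times> int \<Rightarrow> complex" and q :: real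
  assumes "\<kappa> > 0"
    and "(\<lambda>i. (cmod (a i))^2) summable_on hyd_index"
    and "\<exists>i\<in>hyd_index. a i \<noteq> 0"
    and "0 < q" and "q < 1"
  shows "upper_gen_dim (hyd_spectral_measure \<kappa> a) q \<le> ereal (1/3)"
proof -
  note sf = spec_facts[where \<kappa>=\<kappa>, OF assms(2)]
  define \<mu> where "\<mu> = hyd_spectral_measure \<kappa> a"
  define L where "L = \<kappa>^2 / 4"
  have L0: "L > 0" using assms(1) by (simp add: L_def)
  define C where "C = 2 + L"
  define M where "M = measure \<mu> UNIV"
  have M0: "M \<ge> 0" by (simp add: M_def)
  define A where "A = \<bar>(1 - q) * ln C + q * ln M\<bar>"
  have bound: "ln (gen_I \<mu> q e) / ((q - 1) * ln e) \<le> 1/3 + A / ((q - 1) * ln e)"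
    if e: "0 < e" "e < 1" for e
  proof -
    define K where "K = (\<lambda>n::nat. \<lfloor>(- (L / (real n)^2)) / e\<rfloor>) ` {1..}"
    have cK: "finite K \<and> real (card K) \<le> C * e powr (-1/3)"
      using card_cells[OF L0 e(1)] e unfolding K_def C_def by simp
    have AEK: "AE x in \<mu>. \<lfloor>x / e\<rfloor> \<in> K"
      unfolding \<mu>_def
    proof (rule sf(3))
      have "{x::real. \<lfloor>x / e\<rfloor> \<in> K} = (\<Union>k\<in>K. {x. \<lfloor>x / e\<rfloor> = k})" by auto
      also have "\<dots> \<in> sets borel"
      proof (intro sets.finite_UN ballI)
        show "finite K" using cK by simp
        fix k :: int
        have "{x::real. \<lfloor>x / e\<rfloor> = k} = {x. real_of_int k \<le> x / e} \<inter> {x. x / e < real_of_int k + 1}"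
          by (auto simp: floor_eq_iff)
        also have "\<dots> \<in> sets borel" by measurable
        finally show "{x::real. \<lfloor>x / e\<rfloor> = k} \<in> sets borel" .
      qed
      finally show "{x::real. \<lfloor>x / e\<rfloor> \<in> K} \<in> sets borel" .
      fix n :: nat assume "n \<ge> 1"
      then show "\<lfloor>hyd_eigenvalue \<kappa> n / e\<rfloor> \<in> K" by (auto simp: K_def hyd_eigenvalue_def L_def)
    qed
    have Ib: "gen_I \<mu> q e \<le> real (card K) powr (1 - q) * M powr q"
      unfolding M_def \<mu>_def
      by (rule gen_I_bound[OF sf(1) sf(2) e(1) assms(4,5)]) (use cK AEK \<mu>_def in auto)
    define t where "t = e powr (-1/3)"
    have t0: "t > 0" using e by (simp add: t_def)
    have lnt: "ln t = -(1/3) * ln e" using e by (simp add: t_def ln_powr)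
    have lne: "ln e < 0" using e by simp
    have C0: "C > 0" using L0 by (simp add: C_def)
    have "real (card K) powr (1 - q) \<le> (C * t) powr (1 - q)"
      using cK assms(5) by (intro powr_mono2) (auto simp: t_def)
    then have Ib2: "gen_I \<mu> q e \<le> (C * t) powr (1 - q) * M powr q"
      using Ib M0 by (meson mult_right_mono order_trans powr_ge_zero)
    have lnI: "ln (gen_I \<mu> q e) \<le> A + (1 - q) / 3 * (- ln e)"
    proof (cases "gen_I \<mu> q e = 0")
      case True
      have "(1 - q) / 3 * (- ln e) \<ge> 0" using lne assms(5) by (intro mult_nonneg_nonneg) auto
      moreover have "A \<ge> 0" by (simp add: A_def)
      ultimately show ?thesis using True by simp
    next
      case False
      then have Ipos: "gen_I \<mu> q e > 0" using gen_I_nonneg[of \<mu> q e] by simp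
      have Mpos: "M > 0"
      proof (rule ccontr)
        assume "\<not> M > 0" then have "M = 0" using M0 by simp
        then show False using Ib2 Ipos by simp
      qed
      have "ln (gen_I \<mu> q e) \<le> ln ((C * t) powr (1 - q) * M powr q)"
        using Ipos Ib2 by simp
      also have "\<dots> = (1 - q) * (ln C + ln t) + q * ln M"
        using C0 t0 Mpos by (simp add: ln_mult ln_powr)
      also have "\<dots> = ((1 - q) * ln C + q * ln M) + (1 - q) / 3 * (- ln e)"
        unfolding lnt by (simp add: field_simps)
      also have "\<dots> \<le> A + (1 - q) / 3 * (- ln e)" by (simp add: A_def)
      finally show ?thesis .
    qed
    have D: "(q - 1) * ln e > 0" using lne assms(5) by (simp add: mult_neg_neg)
    have "ln (gen_I \<mu> q e) / ((q - 1) * ln e) \<le> (A + (1 - q) / 3 * (- ln e)) / ((q - 1) * ln e)"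
      using lnI D by (intro divide_right_mono) auto
    also have "\<dots> = 1/3 + A / ((q - 1) * ln e)"
      using D lne assms(5) by (simp add: field_simps)
    finally show ?thesis .
  qed
  have ev: "eventually (\<lambda>e. ereal (ln (gen_I \<mu> q e) / ((q - 1) * ln e))
              \<le> ereal (1/3 + A / ((q - 1) * ln e))) (at_right (0::real))"
  proof -
    have "eventually (\<lambda>e::real. e \<in> {0<..<1}) (at_right 0)" by (rule eventually_at_right_real) simp
    then show ?thesis by (rule eventually_mono) (use bound in auto)
  qed
  have "upper_gen_dim \<mu> q \<le> Limsup (at_right 0) (\<lambda>e. ereal (1/3 + A / ((q - 1) * ln e)))"
    unfolding upper_gen_dim_def by (rule Limsup_mono[OF ev])
  also have "\<dots> = ereal (1/3)"
    by (rule lim_imp_Limsup[OF _ lim_aux]) simp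
  finally show ?thesis by (simp add: \<mu>_def)
qed

end
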